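(* Let $i,j,k$ be integers with $j>i>0$ and $0\le k<i$, and suppose $(i,j-i,k)$ is a virtually null-homotopic virtual knot with \[ \mathrm{vu}((i,j-i,k))\le \frac{(i-1)(j-i-1)+k}{2}. \] Then $(i,j,k)$ is a virtually null-homotopic virtual knot and \[ \mathrm{vu}((i,j,k))\le \frac{(i-1)(j-1)+k}{2}. \]
   Context: Braid conventions: braids on $i$ strands are drawn horizontally, oriented left to right, with positions $1,\dots,i$ numbered from top to bottom, and words are read left to right. The generator $\sigma_m$ is a classical (positive) crossing at which the strand in position $m$ moves to position $m+1$, passing over the strand moving from position $m+1$ to position $m$. Virtual crossings carry no over/under information. For $j\ge1$, $VB^1_{i,j}$ is obtained from $(\sigma_1\cdots\sigma_{i-1})^j$ by replacing the crossings of the first (left-most) block $\sigma_1\cdots\sigma_{i-1}$ by virtual crossings. $B_k=\sigma_k\cdots\sigma_1$, with $B_0$ trivial. $(i,j,k)$ is the closure of $VB^1_{i,j}B_k$. Virtual knots are considered up to generalized Reidemeister moves: classical R1–R3, virtual VR1–VR3 and mixed MR. A crossing change switches a classical crossing. A virtual knot is virtually null-homotopic if it can be turned into the unknot by these moves and crossing changes. For such a knot $K$, $\mathrm{vu}(K)$ is the minimal number of crossing changes needed to do so. *)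

theory Defs
  imports Main "HOL.Real"
begin

text \<open>Letters of a virtual braid word on positions numbered 1,...,i (top to bottom).
  Virt m is the virtual crossing between positions m and m+1;
  Clas m is the positive classical generator sigma_m: the strand in position m
  moves to position m+1, passing over the strand moving from m+1 to m.\<close>

datatype bletter = Virt nat | Clas nat

text \<open>VB^1_{i,j} B_k: (sigma_1 ... sigma_{i-1})^j with the first block virtual, followed by
  B_k = sigma_k ... sigma_1.\<close>

definition vbword :: "nat \<Rightarrow> nat \<Rightarrow> nat \<Rightarrow> bletter list" where
  "vbword i j k =
     map Virt [1..<i] @ concat (replicate (j - 1) (map Clas [1..<i])) @ map Clas (rev [1..<Suc k])"

text \<open>A (cyclic) signed Gauss code: entries (crossing label, is-over-passage, is-positive).\<close>

type_synonym gentry = "nat \<times> bool \<times> bool"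
type_synonym gcode = "gentry list"

definition labels :: "gcode \<Rightarrow> nat set" where
  "labels w = fst ` set w"

text \<open>One left-to-right pass along the braid starting at position p; crossings are labelled
  by their index in the word.  Returns the recorded crossing passages and the final position.\<close>

fun pass :: "nat \<Rightarrow> nat \<Rightarrow> bletter list \<Rightarrow> gcode \<times> nat" where
  "pass t p [] = ([], p)"
| "pass t p (Virt m # w) =
     pass (Suc t) (if p = m then Suc m else if p = Suc m then m else p) w"
| "pass t p (Clas m # w) =
     (let r = pass (Suc t) (if p = m then Suc m else if p = Suc m then m else p) w in
      ((if p = m then [(t, True, True)] else if p = Suc m then [(t, False, True)] else [])
        @ fst r, snd r))"

definition bperm :: "bletter list \<Rightarrow> nat \<Rightarrow> nat" where
  "bperm w p = snd (pass 0 p w)"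

text \<open>The closure of a braid word on i strands is a knot (one component) iff the strand
  starting at position 1 visits all i positions before closing up.\<close>

definition closure_is_knot :: "nat \<Rightarrow> bletter list \<Rightarrow> bool" where
  "closure_is_knot i w \<longleftrightarrow> card ((\<lambda>r. (bperm w ^^ r) 1) ` {..<i}) = i"

text \<open>Gauss code of the closure, traversed from position 1 (meaningful when it is a knot).\<close>

definition closure_code :: "nat \<Rightarrow> bletter list \<Rightarrow> gcode" where
  "closure_code i w = concat (map (\<lambda>r. fst (pass 0 ((bperm w ^^ r) 1) w)) [0..<i])"

definition r1 :: "gcode \<Rightarrow> gcode \<Rightarrow> bool" where
  "r1 w w' \<longleftrightarrow> (\<exists>a b x ov s. w = a @ [(x, ov, s), (x, \<not> ov, s)] @ b \<and> w' = a @ b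
       \<and> x \<notin> labels (a @ b))"

definition r2 :: "gcode \<Rightarrow> gcode \<Rightarrow> bool" where
  "r2 w w' \<longleftrightarrow> (\<exists>a b c x y s q. x \<noteq> y \<and> x \<notin> labels (a @ b @ c) \<and> y \<notin> labels (a @ b @ c)
       \<and> (q = [(x, False, s), (y, False, \<not> s)] \<or> q = [(y, False, \<not> s), (x, False, s)])
       \<and> w = a @ [(x, True, s), (y, True, \<not> s)] @ b @ q @ c \<and> w' = a @ b @ c)"

text \<open>Model: three straight lines L1: y=0, L2: x=0, L3: x+y=1 with base directions
  d1=(1,0), d2=(0,1), d3=(1,-1); det(d1,d2)=1, det(d1,d3)=-1, det(d2,d3)=-1.
  A crossing with over-direction u and under-direction v is positive iff det(u,v) > 0.
  Parameters: direction flips e_n (+-1), a mirror factor mu (+-1), heights h_n (distinct),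
  crossing labels l12 l13 l23 (distinct).  The segment of line n lists its two crossings in
  the order met along the (possibly flipped) direction.  The R3 move reverses all three
  segments.\<close>

definition dsgn :: "nat \<Rightarrow> nat \<Rightarrow> int" where
  "dsgn a b = (if (a, b) = (1, 2) then 1 else if (a, b) = (2, 1) then -1
               else if (a, b) = (1, 3) then -1 else if (a, b) = (3, 1) then 1
               else if (a, b) = (2, 3) then -1 else if (a, b) = (3, 2) then 1 else 0)"

definition r3_config :: "gcode \<Rightarrow> gcode \<Rightarrow> gcode \<Rightarrow> bool" where
  "r3_config s1 s2 s3 \<longleftrightarrow>
    (\<exists>(e :: nat \<Rightarrow> int) (mu :: int) (h :: nat \<Rightarrow> nat) (lab :: nat \<Rightarrow> nat \<Rightarrow> nat).
       (\<forall>n \<in> {1, 2, 3}. e n = 1 \<or> e n = -1) \<and> (mu = 1 \<or> mu = -1)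
       \<and> inj_on h {1, 2, 3}
       \<and> lab 1 2 \<noteq> lab 1 3 \<and> lab 1 2 \<noteq> lab 2 3 \<and> lab 1 3 \<noteq> lab 2 3
       \<and> (let
            L = (\<lambda>a b. if a < b then lab a b else lab b a);
            ov = (\<lambda>a b. h a > h b);
            sg = (\<lambda>a b. if h a > h b then mu * e a * e b * dsgn a b = 1
                                     else mu * e a * e b * dsgn b a = 1);
            ent = (\<lambda>a b. (L a b, ov a b, sg a b));
            seg = (\<lambda>n xs. if e n = 1 then xs else rev xs)
          in s1 = seg 1 [ent 1 2, ent 1 3]
           \<and> s2 = seg 2 [ent 2 1, ent 2 3]
           \<and> s3 = seg 3 [ent 3 2, ent 3 1]))"

definition r3 :: "gcode \<Rightarrow> gcode \<Rightarrow> bool" where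
  "r3 w w' \<longleftrightarrow> (\<exists>a b c d p q r s1 s2 s3. r3_config s1 s2 s3
       \<and> (p, q, r) \<in> {(s1, s2, s3), (s1, s3, s2), (s2, s1, s3), (s2, s3, s1), (s3, s1, s2), (s3, s2, s1)}
       \<and> w = a @ p @ b @ q @ c @ r @ d
       \<and> w' = a @ rev p @ b @ rev q @ c @ rev r @ d)"

text \<open>Gauss codes are cyclic and crossing labels are immaterial.\<close>

definition relabel :: "gcode \<Rightarrow> gcode \<Rightarrow> bool" where
  "relabel w w' \<longleftrightarrow> (\<exists>f. inj_on f (labels w) \<and> w' = map (\<lambda>(l, ov, s). (f l, ov, s)) w)"

definition gmove :: "gcode \<Rightarrow> gcode \<Rightarrow> bool" where
  "gmove w w' \<longleftrightarrow> r1 w w' \<or> r2 w w' \<or> r3 w w' \<or> w' = rotate1 w \<or> relabel w w'"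

definition gequiv :: "gcode \<Rightarrow> gcode \<Rightarrow> bool" where
  "gequiv = (\<lambda>w w'. gmove w w' \<or> gmove w' w)\<^sup>*\<^sup>*"

definition cchange :: "nat \<Rightarrow> gcode \<Rightarrow> gcode" where
  "cchange x w = map (\<lambda>(l, ov, s). if l = x then (l, \<not> ov, \<not> s) else (l, ov, s)) w"

text \<open>unknots_with w n: w can be turned into the unknot (empty code) by moves and at most
  n crossing changes.\<close>

fun unknots_with :: "gcode \<Rightarrow> nat \<Rightarrow> bool" where
  "unknots_with w 0 = gequiv w []"
| "unknots_with w (Suc n) = (unknots_with w n \<or>
     (\<exists>w1 x. gequiv w w1 \<and> x \<in> labels w1 \<and> unknots_with (cchange x w1) n))"

definition virt_null_homotopic :: "gcode \<Rightarrow> bool" where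
  "virt_null_homotopic w \<longleftrightarrow> (\<exists>n. unknots_with w n)"

definition vu :: "gcode \<Rightarrow> nat" where
  "vu w = (LEAST n. unknots_with w n)"

text \<open>The virtual knot (i,j,k) is the closure of VB^1_{i,j} B_k.\<close>

definition ijk_is_knot :: "nat \<Rightarrow> nat \<Rightarrow> nat \<Rightarrow> bool" where
  "ijk_is_knot i j k \<longleftrightarrow> closure_is_knot i (vbword i j k)"

definition ijk :: "nat \<Rightarrow> nat \<Rightarrow> nat \<Rightarrow> gcode" where
  "ijk i j k = closure_code i (vbword i j k)"

end

theory Submission
  imports Defs
begin

datatype slet = V nat | C nat bool nat

definition sw :: "nat \<Rightarrow> nat \<Rightarrow> nat" where
  "sw m p = (if p = m then Suc m else if p = Suc m then m else p)"

fun spass :: "nat \<Rightarrow> slet list \<Rightarrow> gcode \<times> nat" where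
  "spass p [] = ([], p)"
| "spass p (V m # w) = spass (sw m p) w"
| "spass p (C m s l # w) =
     (let r = spass (sw m p) w in
      ((if p = m then [(l, s, s)] else if p = Suc m then [(l, \<not> s, s)] else []) @ fst r, snd r))"

definition sperm :: "slet list \<Rightarrow> nat \<Rightarrow> nat" where
  "sperm w p = snd (spass p w)"

definition scode :: "nat \<Rightarrow> slet list \<Rightarrow> gcode" where
  "scode N w = concat (map (\<lambda>r. fst (spass ((sperm w ^^ r) 1) w)) [0..<N])"

fun tol :: "nat \<Rightarrow> bletter list \<Rightarrow> slet list" where
  "tol t [] = []"
| "tol t (Virt m # w) = V m # tol (Suc t) w"
| "tol t (Clas m # w) = C m True t # tol (Suc t) w"

lemma pass_tol: "pass t p w = spass p (tol t w)"
  by (induction t p w rule: pass.induct) (auto simp: sw_def Let_def)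

lemma bperm_tol: "bperm w = sperm (tol 0 w)"
  by (auto simp: bperm_def sperm_def pass_tol)

lemma closure_code_tol: "closure_code n w = scode n (tol 0 w)"
  by (simp add: closure_code_def scode_def bperm_tol pass_tol)

lemma spass_append: "spass p (u @ v) = (fst (spass p u) @ fst (spass (snd (spass p u)) v), snd (spass (snd (spass p u)) v))"
  by (induction p u rule: spass.induct) (auto simp: Let_def)

lemma sperm_append: "sperm (u @ v) = sperm v \<circ> sperm u"
  by (auto simp: sperm_def spass_append)

lemma sperm_simps[simp]: "sperm [] = id" "sperm (V m # w) = sperm w \<circ> sw m" "sperm (C m s l # w) = sperm w \<circ> sw m"
  by (auto simp: sperm_def Let_def)

lemma gequiv_refl[simp]: "gequiv w w" by (simp add: gequiv_def)

lemma gequiv_trans: "gequiv a b \<Longrightarrow> gequiv b c \<Longrightarrow> gequiv a c"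
  unfolding gequiv_def by (rule rtranclp_trans)

lemma gequiv_sym: "gequiv a b \<Longrightarrow> gequiv b a"
  unfolding gequiv_def
proof (induction rule: rtranclp_induct)
  case base then show ?case by simp
next
  case (step y z)
  then show ?case by (metis (mono_tags, lifting) converse_rtranclp_into_rtranclp)
qed

lemma gmove_gequiv: "gmove a b \<Longrightarrow> gequiv a b"
  unfolding gequiv_def by auto

lemma gequiv_rotate: "gequiv w (rotate k w)"
proof (induction k)
  case 0 then show ?case by simp
next
  case (Suc k)
  have "gmove (rotate k w) (rotate1 (rotate k w))" by (simp add: gmove_def)
  then show ?case using Suc by (metis gequiv_trans gmove_gequiv rotate_Suc)
qed

lemma gequiv_swap: "gequiv (a @ b) (b @ a)"
  by (metis gequiv_rotate rotate_append)

lemma unknots_gequiv: "gequiv w w' \<Longrightarrow> unknots_with w' n \<Longrightarrow> unknots_with w n"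
proof (induction n arbitrary: w w')
  case 0 then show ?case by (auto intro: gequiv_trans)
next
  case (Suc n)
  from Suc.prems(2) show ?case
    by (auto intro: Suc.IH[OF Suc.prems(1)] gequiv_trans[OF Suc.prems(1)])
qed

lemma unknots_mono: "unknots_with w n \<Longrightarrow> n \<le> m \<Longrightarrow> unknots_with w m"
proof (induction m)
  case 0 then show ?case by simp
next
  case (Suc m) then show ?case by (cases "n = Suc m") auto
qed

lemma unknots_change: "x \<in> labels w \<Longrightarrow> unknots_with (cchange x w) n \<Longrightarrow> unknots_with w (Suc n)"
  by auto

fun wlabels :: "slet list \<Rightarrow> nat list" where
  "wlabels [] = []"
| "wlabels (V m # w) = wlabels w"
| "wlabels (C m s l # w) = l # wlabels w"

lemma wlabels_append[simp]: "wlabels (u @ v) = wlabels u @ wlabels v"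
  by (induction u rule: wlabels.induct) auto

fun lp :: "slet \<Rightarrow> nat" where "lp (V m) = m" | "lp (C m s l) = m"

definition inrange :: "nat \<Rightarrow> slet list \<Rightarrow> bool" where
  "inrange N w \<longleftrightarrow> (\<forall>x\<in>set w. 1 \<le> lp x \<and> lp x < N)"

definition orb :: "slet list \<Rightarrow> nat \<Rightarrow> nat" where
  "orb w r = (sperm w ^^ r) 1"

definition knotp :: "nat \<Rightarrow> slet list \<Rightarrow> bool" where
  "knotp N w \<longleftrightarrow> card (orb w ` {..<N}) = N"

definition wfk :: "nat \<Rightarrow> slet list \<Rightarrow> bool" where
  "wfk N w \<longleftrightarrow> inrange N w \<and> distinct (wlabels w) \<and> knotp N w"

lemma scode_orb: "scode N w = concat (map (\<lambda>r. fst (spass (orb w r) w)) [0..<N])"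
  by (simp add: scode_def orb_def)

lemma sw_sw[simp]: "sw m (sw m p) = p" by (auto simp: sw_def)

lemma inj_sw: "inj (sw m)" by (metis injI sw_sw)

lemma inj_sperm: "inj (sperm w)"
proof (induction w)
  case Nil then show ?case by simp
next
  case (Cons x w)
  have "\<And>m. inj (sperm w \<circ> sw m)" using Cons inj_sw by (blast intro: inj_compose)
  then show ?case by (cases x) (simp_all add: comp_def)
qed

lemma sw_range: "1 \<le> m \<Longrightarrow> m < N \<Longrightarrow> p \<in> {1..N} \<Longrightarrow> sw m p \<in> {1..N}"
  by (auto simp: sw_def)

lemma sperm_range: "inrange N w \<Longrightarrow> p \<in> {1..N} \<Longrightarrow> sperm w p \<in> {1..N}"
proof (induction w arbitrary: p)
  case Nil then show ?case by simp
next
  case (Cons x w)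
  have e: "sperm (x # w) = sperm w \<circ> sw (lp x)" by (cases x) auto
  have "inrange N w" "1 \<le> lp x" "lp x < N" using Cons.prems by (auto simp: inrange_def)
  then show ?case using Cons e sw_range by (simp del: atLeastAtMost_iff)
qed

lemma sperm_image: "inrange N w \<Longrightarrow> sperm w ` {1..N} = {1..N}"
proof -
  assume a: "inrange N w"
  have s: "sperm w ` {1..N} \<subseteq> {1..N}" using sperm_range[OF a] by blast
  have "card (sperm w ` {1..N}) = card {1..N}"
    using card_image[OF inj_on_subset[OF inj_sperm subset_UNIV]] by simp
  then show ?thesis using s by (simp add: card_subset_eq)
qed

lemma orb_range: "inrange N w \<Longrightarrow> r < N \<Longrightarrow> orb w r \<in> {1..N}"
proof (induction r)
  case 0 then show ?case by (simp add: orb_def)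
next
  case (Suc r)
  then have "orb w r \<in> {1..N}" by simp
  then show ?case using sperm_range[OF Suc.prems(1)] by (simp add: orb_def del: atLeastAtMost_iff)
qed

lemma orb_image: "wfk N w \<Longrightarrow> orb w ` {..<N} = {1..N}"
proof -
  assume a: "wfk N w"
  have s: "orb w ` {..<N} \<subseteq> {1..N}" using orb_range a by (auto simp: wfk_def simp del: atLeastAtMost_iff)
  have "card (orb w ` {..<N}) = card {1..N}" using a by (simp add: wfk_def knotp_def)
  then show ?thesis using s by (simp add: card_subset_eq)
qed

lemma orb_inj: "wfk N w \<Longrightarrow> inj_on (orb w) {..<N}"
  by (rule eq_card_imp_inj_on) (auto simp: wfk_def knotp_def)

lemma bij_g: "wfk N (a @ v) \<Longrightarrow> bij_betw (\<lambda>r. sperm a (orb (a @ v) r)) {..<N} {1..N}"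
proof -
  assume w: "wfk N (a @ v)"
  have ia: "inrange N a" using w by (auto simp: wfk_def inrange_def)
  have "bij_betw (orb (a @ v)) {..<N} {1..N}"
    using orb_inj[OF w] orb_image[OF w] by (simp add: bij_betw_def)
  moreover have "bij_betw (sperm a) {1..N} {1..N}"
    using sperm_image[OF ia] inj_on_subset[OF inj_sperm subset_UNIV] by (simp add: bij_betw_def)
  ultimately have "bij_betw (sperm a \<circ> orb (a @ v)) {..<N} {1..N}" by (rule bij_betw_trans)
  then show ?thesis by (simp add: comp_def)
qed

lemma g_exists: "wfk N (a @ v) \<Longrightarrow> 1 \<le> q \<Longrightarrow> q \<le> N \<Longrightarrow> \<exists>r<N. sperm a (orb (a @ v) r) = q"
proof -
  assume w: "wfk N (a @ v)" and q: "1 \<le> q" "q \<le> N"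
  have "q \<in> (\<lambda>r. sperm a (orb (a @ v) r)) ` {..<N}"
    using bij_betw_imp_surj_on[OF bij_g[OF w]] q by simp
  then show ?thesis by auto
qed

lemma g_inj: "wfk N (a @ v) \<Longrightarrow> r < N \<Longrightarrow> r' < N \<Longrightarrow> sperm a (orb (a @ v) r) = sperm a (orb (a @ v) r') \<Longrightarrow> r = r'"
  using bij_g[of N a v] unfolding bij_betw_def inj_on_def by blast

lemma split_one: "lo \<le> t \<Longrightarrow> t < N \<Longrightarrow>
  concat (map F [lo..<N]) = concat (map F [lo..<t]) @ F t @ concat (map F [Suc t..<N])"
proof -
  assume "lo \<le> t" "t < N"
  then have "[lo..<N] = [lo..<t] @ [t..<N]"
    using upt_add_eq_append[of lo t "N - t"] by simp
  also have "[t..<N] = t # [Suc t..<N]" using \<open>t < N\<close> by (rule upt_conv_Cons)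
  finally show ?thesis by simp
qed

lemma map_vanish: "(\<And>r. r \<in> set rs \<Longrightarrow> U r = [] \<and> U' r = []) \<Longrightarrow>
  map (\<lambda>r. X r @ U r @ Y r) rs = map (\<lambda>r. X r @ U' r @ Y r) rs"
  by (rule map_cong) auto

lemma two_split:
  assumes "t1 < t2" "t2 < N" "\<forall>r<N. r \<noteq> t1 \<longrightarrow> r \<noteq> t2 \<longrightarrow> U r = [] \<and> U' r = []"
  shows "\<exists>K1 K2 K3. concat (map (\<lambda>r. X r @ U r @ Y r) [0..<N]) = K1 @ U t1 @ K2 @ U t2 @ K3
     \<and> concat (map (\<lambda>r. X r @ U' r @ Y r) [0..<N]) = K1 @ U' t1 @ K2 @ U' t2 @ K3"
proof -
  have sp: "concat (map F [0..<N]) = concat (map F [0..<t1]) @ F t1 @ concat (map F [Suc t1..<t2])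
     @ F t2 @ concat (map F [Suc t2..<N])" for F :: "nat \<Rightarrow> 'a list"
    using split_one[of 0 t1 N F] split_one[of "Suc t1" t2 N F] assms by simp
  have e1: "map (\<lambda>r. X r @ U r @ Y r) [0..<t1] = map (\<lambda>r. X r @ U' r @ Y r) [0..<t1]"
    by (rule map_vanish) (use assms in auto)
  have e2: "map (\<lambda>r. X r @ U r @ Y r) [Suc t1..<t2] = map (\<lambda>r. X r @ U' r @ Y r) [Suc t1..<t2]"
    by (rule map_vanish) (use assms in auto)
  have e3: "map (\<lambda>r. X r @ U r @ Y r) [Suc t2..<N] = map (\<lambda>r. X r @ U' r @ Y r) [Suc t2..<N]"
    by (rule map_vanish) (use assms in auto)
  show ?thesis
    apply (rule exI[of _ "concat (map (\<lambda>r. X r @ U r @ Y r) [0..<t1]) @ X t1"])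
    apply (rule exI[of _ "Y t1 @ concat (map (\<lambda>r. X r @ U r @ Y r) [Suc t1..<t2]) @ X t2"])
    apply (rule exI[of _ "Y t2 @ concat (map (\<lambda>r. X r @ U r @ Y r) [Suc t2..<N])"])
    unfolding sp[of "\<lambda>r. X r @ U r @ Y r"] sp[of "\<lambda>r. X r @ U' r @ Y r"] e1 e2 e3 by simp
qed

lemma three_split:
  assumes "t1 < t2" "t2 < t3" "t3 < N" "\<forall>r<N. r \<noteq> t1 \<longrightarrow> r \<noteq> t2 \<longrightarrow> r \<noteq> t3 \<longrightarrow> U r = [] \<and> U' r = []"
  shows "\<exists>K1 K2 K3 K4. concat (map (\<lambda>r. X r @ U r @ Y r) [0..<N]) = K1 @ U t1 @ K2 @ U t2 @ K3 @ U t3 @ K4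
     \<and> concat (map (\<lambda>r. X r @ U' r @ Y r) [0..<N]) = K1 @ U' t1 @ K2 @ U' t2 @ K3 @ U' t3 @ K4"
proof -
  have sp: "concat (map F [0..<N]) = concat (map F [0..<t1]) @ F t1 @ concat (map F [Suc t1..<t2])
     @ F t2 @ concat (map F [Suc t2..<t3]) @ F t3 @ concat (map F [Suc t3..<N])" for F :: "nat \<Rightarrow> 'a list"
    using split_one[of 0 t1 N F] split_one[of "Suc t1" t2 N F] split_one[of "Suc t2" t3 N F] assms by simp
  have e1: "map (\<lambda>r. X r @ U r @ Y r) [0..<t1] = map (\<lambda>r. X r @ U' r @ Y r) [0..<t1]"
    by (rule map_vanish) (use assms in auto)
  have e2: "map (\<lambda>r. X r @ U r @ Y r) [Suc t1..<t2] = map (\<lambda>r. X r @ U' r @ Y r) [Suc t1..<t2]"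
    by (rule map_vanish) (use assms in auto)
  have e3: "map (\<lambda>r. X r @ U r @ Y r) [Suc t2..<t3] = map (\<lambda>r. X r @ U' r @ Y r) [Suc t2..<t3]"
    by (rule map_vanish) (use assms in auto)
  have e4: "map (\<lambda>r. X r @ U r @ Y r) [Suc t3..<N] = map (\<lambda>r. X r @ U' r @ Y r) [Suc t3..<N]"
    by (rule map_vanish) (use assms in auto)
  show ?thesis
    apply (rule exI[of _ "concat (map (\<lambda>r. X r @ U r @ Y r) [0..<t1]) @ X t1"])
    apply (rule exI[of _ "Y t1 @ concat (map (\<lambda>r. X r @ U r @ Y r) [Suc t1..<t2]) @ X t2"])
    apply (rule exI[of _ "Y t2 @ concat (map (\<lambda>r. X r @ U r @ Y r) [Suc t2..<t3]) @ X t3"])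
    apply (rule exI[of _ "Y t3 @ concat (map (\<lambda>r. X r @ U r @ Y r) [Suc t3..<N])"])
    unfolding sp[of "\<lambda>r. X r @ U r @ Y r"] sp[of "\<lambda>r. X r @ U' r @ Y r"] e1 e2 e3 e4 by simp
qed

lemma orb_cong: "sperm w = sperm w' \<Longrightarrow> orb w = orb w'"
  by (rule ext) (simp add: orb_def)

lemma code_ctx: "sperm (a @ u @ b) = sperm (a @ u' @ b) \<Longrightarrow> sperm u = sperm u' \<Longrightarrow>
  scode N (a @ u @ b) = concat (map (\<lambda>r. fst (spass (orb (a @ u @ b) r) a) @ fst (spass (sperm a (orb (a @ u @ b) r)) u)
     @ fst (spass (sperm u (sperm a (orb (a @ u @ b) r))) b)) [0..<N]) \<and>
  scode N (a @ u' @ b) = concat (map (\<lambda>r. fst (spass (orb (a @ u @ b) r) a) @ fst (spass (sperm a (orb (a @ u @ b) r)) u')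
     @ fst (spass (sperm u (sperm a (orb (a @ u @ b) r))) b)) [0..<N])"
proof -
  assume h1: "sperm (a @ u @ b) = sperm (a @ u' @ b)" and h2: "sperm u = sperm u'"
  have h: "snd (spass p u') = snd (spass p u)" for p using h2 by (metis sperm_def)
  show ?thesis using orb_cong[OF h1]
    by (simp add: scode_orb spass_append h) (simp add: sperm_def)
qed

lemma labels_spass: "fst ` set (fst (spass p w)) \<subseteq> set (wlabels w)"
  by (induction p w rule: spass.induct) (auto simp: Let_def)

lemma labels_scode: "labels (scode N w) \<subseteq> set (wlabels w)"
  using labels_spass by (fastforce simp: labels_def scode_def)

lemma wf_inrange_mid: "wfk N (a @ u @ b) \<Longrightarrow> x \<in> set u \<Longrightarrow> 1 \<le> lp x \<and> lp x < N"
  by (auto simp: wfk_def inrange_def)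

lemma r2_word:
  assumes w: "wfk N (a @ [C m True x, C m False y] @ b)"
  shows "gequiv (scode N (a @ [C m True x, C m False y] @ b)) (scode N (a @ [] @ b))"
proof -
  define u where "u = [C m True x, C m False y]"
  have su: "sperm u = sperm []" by (rule ext) (simp add: u_def sw_def)
  have sw: "sperm (a @ u @ b) = sperm (a @ [] @ b)" by (simp add: sperm_append su)
  define G where "G r = sperm a (orb (a @ u @ b) r)" for r
  define X where "X r = fst (spass (orb (a @ u @ b) r) a)" for r
  define U where "U r = fst (spass (G r) u)" for r
  define U' where "U' r = (fst (spass (G r) []) :: gcode)" for r
  define Y where "Y r = fst (spass (sperm u (G r)) b)" for r
  have c1: "scode N (a @ u @ b) = concat (map (\<lambda>r. X r @ U r @ Y r) [0..<N])"
   and c2: "scode N (a @ [] @ b) = concat (map (\<lambda>r. X r @ U' r @ Y r) [0..<N])"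
    using code_ctx[OF sw su, of N] by (simp_all add: X_def U_def U'_def Y_def G_def)
  define OV where "OV = [(x, True, True), (y, True, False)]"
  define Q where "Q = [(x, False, True), (y, False, False)]"
  have Ueq: "U r = (if G r = m then OV else if G r = Suc m then Q else [])" for r
    by (auto simp: U_def u_def sw_def Let_def OV_def Q_def)
  have U'eq: "U' r = []" for r by (simp add: U'_def)
  have wu: "wfk N (a @ (u @ b))" using w by (simp add: u_def)
  have m: "1 \<le> m" "m < N" using wf_inrange_mid[OF w, of "C m True x"] by auto
  obtain ra where ra: "ra < N" "G ra = m" using g_exists[OF wu, of m] m G_def by auto
  obtain rb where rb: "rb < N" "G rb = Suc m" using g_exists[OF wu, of "Suc m"] m G_def by auto
  have ne: "ra \<noteq> rb" using ra rb by auto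
  have van: "\<forall>r<N. r \<noteq> ra \<longrightarrow> r \<noteq> rb \<longrightarrow> U r = [] \<and> U' r = []"
  proof (intro allI impI)
    fix r assume r: "r < N" "r \<noteq> ra" "r \<noteq> rb"
    have "G r \<noteq> m" using g_inj[OF wu r(1) ra(1)] r ra by (auto simp: G_def)
    moreover have "G r \<noteq> Suc m" using g_inj[OF wu r(1) rb(1)] r rb by (auto simp: G_def)
    ultimately show "U r = [] \<and> U' r = []" by (simp add: Ueq U'eq)
  qed
  have d: "distinct (wlabels a @ x # y # wlabels b)" using w by (simp add: wfk_def)
  have fresh: "x \<notin> labels (scode N (a @ [] @ b))" "y \<notin> labels (scode N (a @ [] @ b))" "x \<noteq> y"
    using labels_scode[of N "a @ [] @ b"] d by auto
  show ?thesis
  proof (cases "ra < rb")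
    case True
    obtain K1 K2 K3 where k1: "concat (map (\<lambda>r. X r @ U r @ Y r) [0..<N]) = K1 @ U ra @ K2 @ U rb @ K3"
      and k2: "concat (map (\<lambda>r. X r @ U' r @ Y r) [0..<N]) = K1 @ U' ra @ K2 @ U' rb @ K3"
      using two_split[OF True rb(1) van] by blast
    have "r2 (K1 @ OV @ K2 @ Q @ K3) (K1 @ K2 @ K3)"
      unfolding r2_def using fresh c2 k2 U'eq
      by (intro exI[of _ K1] exI[of _ K2] exI[of _ K3] exI[of _ x] exI[of _ y] exI[of _ True] exI[of _ Q])
         (auto simp: OV_def Q_def)
    then show ?thesis using c1 c2 k1 k2 Ueq U'eq ra rb
      by (simp add: u_def gmove_def gmove_gequiv)
  next
    case False
    then have lt: "rb < ra" using ne by simp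
    have van': "\<forall>r<N. r \<noteq> rb \<longrightarrow> r \<noteq> ra \<longrightarrow> U r = [] \<and> U' r = []" using van by blast
    obtain K1 K2 K3 where k1: "concat (map (\<lambda>r. X r @ U r @ Y r) [0..<N]) = K1 @ U rb @ K2 @ U ra @ K3"
      and k2: "concat (map (\<lambda>r. X r @ U' r @ Y r) [0..<N]) = K1 @ U' rb @ K2 @ U' ra @ K3"
      using two_split[OF lt ra(1) van'] by blast
    have "r2 (OV @ K3 @ K1 @ Q @ K2) (K3 @ K1 @ K2)"
      unfolding r2_def using fresh c2 k2 U'eq
      by (intro exI[of _ "[]"] exI[of _ "K3 @ K1"] exI[of _ K2] exI[of _ x] exI[of _ y] exI[of _ True] exI[of _ Q])
         (auto simp: OV_def Q_def labels_def)
    then have g: "gequiv (OV @ K3 @ K1 @ Q @ K2) (K3 @ K1 @ K2)" by (simp add: gmove_def gmove_gequiv)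
    have g1: "gequiv (K1 @ Q @ K2 @ OV @ K3) (OV @ K3 @ K1 @ Q @ K2)"
      using gequiv_swap[of "K1 @ Q @ K2" "OV @ K3"] by simp
    have g2: "gequiv (K3 @ K1 @ K2) (K1 @ K2 @ K3)"
      using gequiv_swap[of K3 "K1 @ K2"] by simp
    show ?thesis using c1 c2 k1 k2 Ueq U'eq ra rb gequiv_trans[OF g1 gequiv_trans[OF g g2]]
      by (simp add: u_def)
  qed
qed

lemma r3cfg:
  assumes "x \<noteq> y" "x \<noteq> z" "y \<noteq> z"
  shows "r3_config [(x, True, True), (y, True, True)] [(x, False, True), (z, s, s)] [(y, False, True), (z, \<not> s, s)]"
proof -
  define e :: "nat \<Rightarrow> int" where "e n = (if n = 3 then -1 else 1)" for n
  define h :: "nat \<Rightarrow> nat" where "h n = (if n = 1 then 3 else if n = 2 then (if s then 2 else 1) else (if s then 1 else 2))" for n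
  define lab :: "nat \<Rightarrow> nat \<Rightarrow> nat" where "lab a b = (if (a, b) = (1, 2) then x else if (a, b) = (1, 3) then y else z)" for a b
  have inj: "inj_on h {1, 2, 3}" by (auto simp: inj_on_def h_def)
  show ?thesis unfolding r3_config_def
    apply (rule exI[of _ e], rule exI[of _ 1], rule exI[of _ h], rule exI[of _ lab])
    using assms inj by (cases s) (auto simp: e_def h_def lab_def dsgn_def Let_def)
qed

lemma sort3:
  fixes ra rb rc :: nat
  assumes "ra \<noteq> rb" "ra \<noteq> rc" "rb \<noteq> rc"
  shows "\<exists>t1 t2 t3. t1 < t2 \<and> t2 < t3 \<and> {t1, t2, t3} = {ra, rb, rc} \<and>
    (f t1, f t2, f t3) \<in> {(f ra, f rb, f rc), (f ra, f rc, f rb), (f rb, f ra, f rc), (f rb, f rc, f ra), (f rc, f ra, f rb), (f rc, f rb, f ra)}"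
proof -
  have "ra < rb \<and> rb < rc \<or> ra < rc \<and> rc < rb \<or> rb < ra \<and> ra < rc \<or> rb < rc \<and> rc < ra \<or> rc < ra \<and> ra < rb \<or> rc < rb \<and> rb < ra"
    using assms by arith
  then show ?thesis
    apply (elim disjE)
    subgoal by (rule exI[of _ ra], rule exI[of _ rb], rule exI[of _ rc]) auto
    subgoal by (rule exI[of _ ra], rule exI[of _ rc], rule exI[of _ rb]) auto
    subgoal by (rule exI[of _ rb], rule exI[of _ ra], rule exI[of _ rc]) auto
    subgoal by (rule exI[of _ rb], rule exI[of _ rc], rule exI[of _ ra]) auto
    subgoal by (rule exI[of _ rc], rule exI[of _ ra], rule exI[of _ rb]) auto
    subgoal by (rule exI[of _ rc], rule exI[of _ rb], rule exI[of _ ra]) auto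
    done
qed

lemma r3_word:
  assumes w: "wfk N (a @ [C m True x, C (Suc m) True y, C m s z] @ b)"
  shows "gequiv (scode N (a @ [C m True x, C (Suc m) True y, C m s z] @ b))
                (scode N (a @ [C (Suc m) s z, C m True y, C (Suc m) True x] @ b))"
proof -
  define u where "u = [C m True x, C (Suc m) True y, C m s z]"
  define u' where "u' = [C (Suc m) s z, C m True y, C (Suc m) True x]"
  have su: "sperm u = sperm u'" by (rule ext) (simp add: u_def u'_def sw_def)
  have sw: "sperm (a @ u @ b) = sperm (a @ u' @ b)" by (simp add: sperm_append su)
  define G where "G r = sperm a (orb (a @ u @ b) r)" for r
  define X where "X r = fst (spass (orb (a @ u @ b) r) a)" for r
  define U where "U r = fst (spass (G r) u)" for r
  define U' where "U' r = fst (spass (G r) u')" for r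
  define Y where "Y r = fst (spass (sperm u (G r)) b)" for r
  have c1: "scode N (a @ u @ b) = concat (map (\<lambda>r. X r @ U r @ Y r) [0..<N])"
   and c2: "scode N (a @ u' @ b) = concat (map (\<lambda>r. X r @ U' r @ Y r) [0..<N])"
    using code_ctx[OF sw su, of N] by (simp_all add: X_def U_def U'_def Y_def G_def)
  define SP where "SP = [(x, True, True), (y, True, True)]"
  define SQ where "SQ = [(x, False, True), (z, s, s)]"
  define SR where "SR = [(y, False, True), (z, \<not> s, s)]"
  have Ueq: "U r = (if G r = m then SP else if G r = Suc m then SQ else if G r = Suc (Suc m) then SR else [])" for r
    by (auto simp: U_def u_def sw_def Let_def SP_def SQ_def SR_def)
  have U'eq: "U' r = rev (U r)" for r
    by (auto simp: U'_def U_def u_def u'_def sw_def Let_def)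
  have wu: "wfk N (a @ (u @ b))" using w by (simp add: u_def)
  have m: "1 \<le> m" "Suc m < N" using wf_inrange_mid[OF w, of "C (Suc m) True y"] wf_inrange_mid[OF w, of "C m True x"] by auto
  obtain ra where ra: "ra < N" "G ra = m" using g_exists[OF wu, of m] m G_def by auto
  obtain rb where rb: "rb < N" "G rb = Suc m" using g_exists[OF wu, of "Suc m"] m G_def by auto
  obtain rc where rc: "rc < N" "G rc = Suc (Suc m)" using g_exists[OF wu, of "Suc (Suc m)"] m G_def by auto
  have ne: "ra \<noteq> rb" "ra \<noteq> rc" "rb \<noteq> rc" using ra rb rc by auto
  have van: "U r = [] \<and> U' r = []" if r: "r < N" "r \<notin> {ra, rb, rc}" for r
  proof -
    have "G r \<noteq> m" using g_inj[OF wu r(1) ra(1)] r ra by (auto simp: G_def)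
    moreover have "G r \<noteq> Suc m" using g_inj[OF wu r(1) rb(1)] r rb by (auto simp: G_def)
    moreover have "G r \<noteq> Suc (Suc m)" using g_inj[OF wu r(1) rc(1)] r rc by (auto simp: G_def)
    ultimately show ?thesis by (simp add: Ueq U'eq)
  qed
  have d: "distinct (wlabels a @ x # y # z # wlabels b)" using w by (simp add: wfk_def)
  have cfg: "r3_config SP SQ SR" unfolding SP_def SQ_def SR_def by (rule r3cfg) (use d in auto)
  have Uabc: "U ra = SP" "U rb = SQ" "U rc = SR" using ra rb rc by (auto simp: Ueq)
  obtain t1 t2 t3 where t: "t1 < t2" "t2 < t3" "{t1, t2, t3} = {ra, rb, rc}"
    and pm: "(U t1, U t2, U t3) \<in> {(U ra, U rb, U rc), (U ra, U rc, U rb), (U rb, U ra, U rc), (U rb, U rc, U ra), (U rc, U ra, U rb), (U rc, U rb, U ra)}"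
    using sort3[OF ne, of U] by blast
  have "t3 \<in> {ra, rb, rc}" using t(3) by blast
  then have t3N: "t3 < N" using ra rb rc by auto
  have van': "\<forall>r<N. r \<noteq> t1 \<longrightarrow> r \<noteq> t2 \<longrightarrow> r \<noteq> t3 \<longrightarrow> U r = [] \<and> U' r = []"
    using van t(3) by blast
  obtain K1 K2 K3 K4 where k1: "concat (map (\<lambda>r. X r @ U r @ Y r) [0..<N]) = K1 @ U t1 @ K2 @ U t2 @ K3 @ U t3 @ K4"
    and k2: "concat (map (\<lambda>r. X r @ U' r @ Y r) [0..<N]) = K1 @ U' t1 @ K2 @ U' t2 @ K3 @ U' t3 @ K4"
    using three_split[OF t(1) t(2) t3N van'] by blast
  have "r3 (K1 @ U t1 @ K2 @ U t2 @ K3 @ U t3 @ K4) (K1 @ rev (U t1) @ K2 @ rev (U t2) @ K3 @ rev (U t3) @ K4)"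
    unfolding r3_def
    apply (rule exI[of _ K1], rule exI[of _ K2], rule exI[of _ K3], rule exI[of _ K4])
    apply (rule exI[of _ "U t1"], rule exI[of _ "U t2"], rule exI[of _ "U t3"])
    apply (rule exI[of _ SP], rule exI[of _ SQ], rule exI[of _ SR])
    using cfg pm Uabc by simp
  then show ?thesis using c1 c2 k1 k2 U'eq
    by (simp add: u_def u'_def gmove_def gmove_gequiv)
qed

definition wr :: "nat \<Rightarrow> slet list \<Rightarrow> slet list \<Rightarrow> bool" where
  "wr N w w' \<longleftrightarrow> sperm w = sperm w' \<and> (wfk N w \<longrightarrow> wfk N w' \<and> gequiv (scode N w) (scode N w'))"

lemma wr_refl: "wr N w w" by (simp add: wr_def)

lemma wr_trans: "wr N w1 w2 \<Longrightarrow> wr N w2 w3 \<Longrightarrow> wr N w1 w3"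
  unfolding wr_def
proof (intro conjI impI)
  assume a: "sperm w1 = sperm w2 \<and> (wfk N w1 \<longrightarrow> wfk N w2 \<and> gequiv (scode N w1) (scode N w2))"
     and b: "sperm w2 = sperm w3 \<and> (wfk N w2 \<longrightarrow> wfk N w3 \<and> gequiv (scode N w2) (scode N w3))"
  show "sperm w1 = sperm w3" using a b by simp
  assume c: "wfk N w1"
  show "wfk N w3" using a b c by blast
  show "gequiv (scode N w1) (scode N w3)" using a b c gequiv_trans by blast
qed

lemma knotp_cong: "sperm w = sperm w' \<Longrightarrow> knotp N w = knotp N w'"
proof -
  assume h: "sperm w = sperm w'"
  show ?thesis by (simp add: knotp_def orb_cong[OF h])
qed

lemma wr_comm:
  assumes far: "Suc (Suc m) \<le> m' \<or> Suc (Suc m') \<le> m"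
  shows "wr N (c @ [C m s x, C m' s' y] @ d) (c @ [C m' s' y, C m s x] @ d)"
proof -
  have loc: "spass p [C m s x, C m' s' y] = spass p [C m' s' y, C m s x]" for p
    using far by (auto simp: sw_def Let_def)
  have sp: "spass p (c @ [C m s x, C m' s' y] @ d) = spass p (c @ [C m' s' y, C m s x] @ d)" for p
    by (simp only: spass_append loc)
  have pe: "sperm (c @ [C m s x, C m' s' y] @ d) = sperm (c @ [C m' s' y, C m s x] @ d)"
    by (rule ext) (simp only: sperm_def sp)
  have ce: "scode N (c @ [C m s x, C m' s' y] @ d) = scode N (c @ [C m' s' y, C m s x] @ d)"
    unfolding scode_def pe sp ..
  show ?thesis unfolding wr_def using pe ce knotp_cong[OF pe]
    by (auto simp: wfk_def inrange_def)
qed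

lemma wr_r2: "wr N (c @ [C m True x, C m False y] @ d) (c @ d)"
proof -
  have su: "sperm [C m True x, C m False y] = sperm []" by (rule ext) (simp add: sw_def)
  have pe: "sperm (c @ [C m True x, C m False y] @ d) = sperm (c @ d)" by (simp only: sperm_append su) simp
  show ?thesis unfolding wr_def using pe knotp_cong[OF pe] r2_word[of N c m x y d]
    by (auto simp: wfk_def inrange_def)
qed

lemma wr_r3: "wr N (c @ [C m True x, C (Suc m) True y, C m s z] @ d)
                  (c @ [C (Suc m) s z, C m True y, C (Suc m) True x] @ d)"
proof -
  have su: "sperm [C m True x, C (Suc m) True y, C m s z] = sperm [C (Suc m) s z, C m True y, C (Suc m) True x]"
    by (rule ext) (simp add: sw_def)
  have pe: "sperm (c @ [C m True x, C (Suc m) True y, C m s z] @ d) = sperm (c @ [C (Suc m) s z, C m True y, C (Suc m) True x] @ d)"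
    by (simp only: sperm_append su)
  show ?thesis unfolding wr_def using pe knotp_cong[OF pe] r3_word[of N c m x y s z d]
    by (auto simp: wfk_def inrange_def)
qed

fun sweep :: "nat \<Rightarrow> nat list \<Rightarrow> slet list" where
  "sweep a [] = []"
| "sweep a (l # ls) = C a True l # sweep (Suc a) ls"

lemma sweep_append: "sweep a (ls1 @ ls2) = sweep a ls1 @ sweep (a + length ls1) ls2"
  by (induction ls1 arbitrary: a) auto

lemma wr_comm_sweep:
  assumes "Suc (Suc q) \<le> a \<or> a + length ls + 1 \<le> q"
  shows "wr N (c @ sweep a ls @ [C q s x] @ d) (c @ [C q s x] @ sweep a ls @ d)"
  using assms
proof (induction ls arbitrary: a c)
  case Nil then show ?case by (simp add: wr_refl)
next
  case (Cons l ls)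
  have ih: "wr N ((c @ [C a True l]) @ sweep (Suc a) ls @ [C q s x] @ d) ((c @ [C a True l]) @ [C q s x] @ sweep (Suc a) ls @ d)"
    using Cons.prems by (intro Cons.IH) auto
  have sw: "wr N (c @ [C a True l, C q s x] @ (sweep (Suc a) ls @ d)) (c @ [C q s x, C a True l] @ (sweep (Suc a) ls @ d))"
    using Cons.prems by (intro wr_comm) auto
  show ?case using wr_trans[OF ih] sw by simp
qed

lemma sweep_split:
  assumes "a0 \<le> q" "q + 2 \<le> a0 + length ls"
  shows "\<exists>ls1 l1 l2 ls2. ls = ls1 @ l1 # l2 # ls2 \<and> a0 + length ls1 = q"
proof -
  define k where "k = q - a0"
  have k: "Suc k < length ls" using assms by (simp add: k_def)
  have "ls = take k ls @ ls ! k # ls ! Suc k # drop (Suc (Suc k)) ls"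
    using k by (metis Cons_nth_drop_Suc Suc_lessD append_take_drop_id)
  then show ?thesis using assms k by (intro exI[of _ "take k ls"] exI[of _ "ls ! k"] exI[of _ "ls ! Suc k"] exI[of _ "drop (Suc (Suc k)) ls"]) (auto simp: k_def)
qed

lemma L1:
  assumes "a0 \<le> q" "q + 2 \<le> a0 + length ls"
  shows "\<exists>ls'. length ls' = length ls \<and> wr N (c @ sweep a0 ls @ [C q s x] @ d) (c @ [C (Suc q) s x] @ sweep a0 ls' @ d)"
proof -
  obtain ls1 l1 l2 ls2 where ls: "ls = ls1 @ l1 # l2 # ls2" and q: "a0 + length ls1 = q"
    using sweep_split[OF assms] by blast
  have sw: "sweep a0 ls = sweep a0 ls1 @ [C q True l1, C (Suc q) True l2] @ sweep (Suc (Suc q)) ls2"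
    using q by (simp add: ls sweep_append)
  define ls' where "ls' = ls1 @ l2 # l1 # ls2"
  have sw': "sweep a0 ls' = sweep a0 ls1 @ [C q True l2, C (Suc q) True l1] @ sweep (Suc (Suc q)) ls2"
    using q by (simp add: ls'_def sweep_append)
  have s1: "wr N ((c @ sweep a0 ls1 @ [C q True l1, C (Suc q) True l2]) @ sweep (Suc (Suc q)) ls2 @ [C q s x] @ d)
                 ((c @ sweep a0 ls1 @ [C q True l1, C (Suc q) True l2]) @ [C q s x] @ sweep (Suc (Suc q)) ls2 @ d)"
    by (rule wr_comm_sweep) simp
  have s2: "wr N ((c @ sweep a0 ls1) @ [C q True l1, C (Suc q) True l2, C q s x] @ (sweep (Suc (Suc q)) ls2 @ d))
                 ((c @ sweep a0 ls1) @ [C (Suc q) s x, C q True l2, C (Suc q) True l1] @ (sweep (Suc (Suc q)) ls2 @ d))"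
    by (rule wr_r3)
  have s3: "wr N (c @ sweep a0 ls1 @ [C (Suc q) s x] @ ([C q True l2, C (Suc q) True l1] @ sweep (Suc (Suc q)) ls2 @ d))
                 (c @ [C (Suc q) s x] @ sweep a0 ls1 @ ([C q True l2, C (Suc q) True l1] @ sweep (Suc (Suc q)) ls2 @ d))"
    by (rule wr_comm_sweep) (use q in simp)
  have "wr N (c @ sweep a0 ls @ [C q s x] @ d) (c @ [C (Suc q) s x] @ sweep a0 ls' @ d)"
    using wr_trans[OF s1[simplified] wr_trans[OF s2[simplified] s3[simplified]]] unfolding sw sw' by simp
  moreover have "length ls' = length ls" by (simp add: ls ls'_def)
  ultimately show ?thesis by blast
qed

lemma L3:
  assumes "ls \<noteq> []"
  shows "wr N (c @ sweep a0 ls @ [C (a0 + length ls - 1) False x] @ d) (c @ sweep a0 (butlast ls) @ d)"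
proof -
  have ls: "ls = butlast ls @ [last ls]" using assms by simp
  have sw: "sweep a0 ls = sweep a0 (butlast ls) @ [C (a0 + length ls - 1) True (last ls)]"
  proof -
    have "sweep a0 (butlast ls @ [last ls]) = sweep a0 (butlast ls) @ sweep (a0 + length (butlast ls)) [last ls]"
      by (rule sweep_append)
    moreover have "0 < length ls" using assms by simp
    ultimately show ?thesis using assms by (simp add: Suc_leI)
  qed
  show ?thesis unfolding sw using wr_r2[of N "c @ sweep a0 (butlast ls)" "a0 + length ls - 1" "last ls" x d] by simp
qed

fun shl :: "slet \<Rightarrow> slet" where
  "shl (C q s x) = C (Suc q) s x"
| "shl (V m) = V m"

lemma pre_proc:
  "(\<forall>X\<in>set P. \<exists>q s x. X = C q s x \<and> a0 \<le> q \<and> q + 2 \<le> a0 + length ls) \<Longrightarrow>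
   \<exists>ls'. length ls' = length ls \<and> wr N (c @ sweep a0 ls @ P @ d) (c @ map shl P @ sweep a0 ls' @ d)"
proof (induction P arbitrary: c ls)
  case Nil then show ?case using wr_refl by auto
next
  case (Cons X P)
  obtain q s x where X: "X = C q s x" "a0 \<le> q" "q + 2 \<le> a0 + length ls" using Cons.prems by auto
  obtain ls1 where l1: "length ls1 = length ls"
    and w1: "wr N (c @ sweep a0 ls @ [C q s x] @ (P @ d)) (c @ [C (Suc q) s x] @ sweep a0 ls1 @ (P @ d))"
    using L1[OF X(2) X(3)] by blast
  obtain ls2 where l2: "length ls2 = length ls1"
    and w2: "wr N ((c @ [C (Suc q) s x]) @ sweep a0 ls1 @ P @ d) ((c @ [C (Suc q) s x]) @ map shl P @ sweep a0 ls2 @ d)"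
    using Cons.IH[of ls1 "c @ [C (Suc q) s x]"] Cons.prems l1 by auto
  show ?case using wr_trans[OF w1[simplified] w2[simplified]] l1 l2 X(1) by auto
qed

lemma post_proc:
  "(\<forall>X\<in>set P. \<exists>q s x. X = C q s x \<and> a0 + length ls + 1 \<le> q) \<Longrightarrow>
   wr N (c @ sweep a0 ls @ P @ d) (c @ P @ sweep a0 ls @ d)"
proof (induction P arbitrary: c)
  case Nil then show ?case using wr_refl by auto
next
  case (Cons X P)
  obtain q s x where X: "X = C q s x" "a0 + length ls + 1 \<le> q" using Cons.prems by auto
  have w1: "wr N (c @ sweep a0 ls @ [C q s x] @ (P @ d)) (c @ [C q s x] @ sweep a0 ls @ (P @ d))"
    using X by (intro wr_comm_sweep) auto
  have w2: "wr N ((c @ [C q s x]) @ sweep a0 ls @ P @ d) ((c @ [C q s x]) @ P @ sweep a0 ls @ d)"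
    by (rule Cons.IH[of "c @ [C q s x]"]) (use Cons.prems in auto)
  show ?case using wr_trans[OF w1[simplified] w2[simplified]] X(1) by auto
qed

lemma upt_mid: "i \<le> j \<Longrightarrow> j < l \<Longrightarrow> [i..<l] = [i..<j] @ j # [Suc j..<l]"
  using upt_add_eq_append[of i j "l - j"] upt_conv_Cons[of j l] by simp

definition blk :: "nat \<Rightarrow> nat \<Rightarrow> (nat \<Rightarrow> nat \<Rightarrow> nat) \<Rightarrow> nat \<Rightarrow> slet list" where
  "blk a n lab k = map (\<lambda>m. C (a + m) (m \<noteq> n - 1 - k) (lab k m)) [0..<n - 1]"

definition blk' :: "nat \<Rightarrow> nat \<Rightarrow> (nat \<Rightarrow> nat \<Rightarrow> nat) \<Rightarrow> nat \<Rightarrow> slet list" where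
  "blk' a n lab k = map (\<lambda>m. C (Suc (a + m)) True (lab k m)) [0..<n - 1 - k]
                  @ map (\<lambda>m. C (a + m) True (lab k m)) [n - k..<n - 1]"

lemma blk_split: "1 \<le> k \<Longrightarrow> k < n \<Longrightarrow> blk a n lab k =
   map (\<lambda>m. C (a + m) True (lab k m)) [0..<n - 1 - k] @ [C (a + (n - 1 - k)) False (lab k (n - 1 - k))]
   @ map (\<lambda>m. C (a + m) True (lab k m)) [n - k..<n - 1]"
proof -
  assume k: "1 \<le> k" "k < n"
  have u0: "[0..<n - 1] = [0..<n - 1 - k] @ (n - 1 - k) # [Suc (n - 1 - k)..<n - 1]"
    by (rule upt_mid; use k in linarith)
  have u: "[0..<n - 1] = [0..<n - 1 - k] @ (n - 1 - k) # [n - k..<n - 1]"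
    using u0 k by (simp add: Suc_diff_Suc)
  show ?thesis unfolding blk_def u using k by (auto intro!: map_cong)
qed

lemma block_step:
  assumes k: "1 \<le> k" "k < n" and ls: "length ls = n - k"
  shows "\<exists>ls'. length ls' = n - k - 1 \<and> wr N (c @ sweep a ls @ blk a n lab k @ d) (c @ blk' a n lab k @ sweep a ls' @ d)"
proof -
  define P1 where "P1 = map (\<lambda>m. C (a + m) True (lab k m)) [0..<n - 1 - k]"
  define P2 where "P2 = map (\<lambda>m. C (a + m) True (lab k m)) [n - k..<n - 1]"
  define A where "A = C (a + length ls - 1) False (lab k (n - 1 - k))"
  have b: "blk a n lab k = P1 @ [A] @ P2" using blk_split[OF k] ls k by (simp add: P1_def P2_def A_def)
  have cond: "\<forall>X\<in>set P1. \<exists>q s x. X = C q s x \<and> a \<le> q \<and> q + 2 \<le> a + length ls"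
    using ls k by (auto simp: P1_def)
  obtain ls1 where l1: "length ls1 = length ls"
    and w1: "wr N (c @ sweep a ls @ P1 @ ([A] @ P2 @ d)) (c @ map shl P1 @ sweep a ls1 @ ([A] @ P2 @ d))"
    using pre_proc[OF cond, of N c "[A] @ P2 @ d"] by blast
  have ne: "ls1 \<noteq> []" using l1 ls k by auto
  have w2: "wr N ((c @ map shl P1) @ sweep a ls1 @ [A] @ (P2 @ d)) ((c @ map shl P1) @ sweep a (butlast ls1) @ (P2 @ d))"
    using L3[OF ne, of N "c @ map shl P1" a "lab k (n - 1 - k)" "P2 @ d"] l1 by (simp add: A_def)
  have w3: "wr N ((c @ map shl P1) @ sweep a (butlast ls1) @ P2 @ d) ((c @ map shl P1) @ P2 @ sweep a (butlast ls1) @ d)"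
    using l1 ls k by (intro post_proc) (auto simp: P2_def)
  have e: "map shl P1 @ P2 = blk' a n lab k" by (simp add: P1_def P2_def blk'_def)
  have "wr N (c @ sweep a ls @ blk a n lab k @ d) (c @ blk' a n lab k @ sweep a (butlast ls1) @ d)"
    using wr_trans[OF w1[simplified] wr_trans[OF w2[simplified] w3[simplified]]] unfolding b e[symmetric] by simp
  moreover have "length (butlast ls1) = n - k - 1" using l1 ls by simp
  ultimately show ?thesis by blast
qed

lemma blocks:
  "k0 \<ge> 1 \<Longrightarrow> k0 \<le> n \<Longrightarrow> length ls = n - k0 \<Longrightarrow>
   wr N (c @ sweep a ls @ concat (map (blk a n lab) [k0..<n]) @ d) (c @ concat (map (blk' a n lab) [k0..<n]) @ d)"
proof (induction "n - k0" arbitrary: k0 ls c)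
  case 0
  then have "k0 = n" "ls = []" by auto
  then show ?case by (simp add: wr_refl)
next
  case (Suc x)
  then have k: "1 \<le> k0" "k0 < n" by auto
  have u: "[k0..<n] = k0 # [Suc k0..<n]" using k by (simp add: upt_conv_Cons)
  obtain ls' where l: "length ls' = n - k0 - 1"
    and w1: "wr N (c @ sweep a ls @ blk a n lab k0 @ (concat (map (blk a n lab) [Suc k0..<n]) @ d))
                  (c @ blk' a n lab k0 @ sweep a ls' @ (concat (map (blk a n lab) [Suc k0..<n]) @ d))"
    using block_step[OF k Suc.prems(3)] by blast
  have w2: "wr N ((c @ blk' a n lab k0) @ sweep a ls' @ concat (map (blk a n lab) [Suc k0..<n]) @ d)
                 ((c @ blk' a n lab k0) @ concat (map (blk' a n lab) [Suc k0..<n]) @ d)"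
    using Suc.hyps(1)[of "Suc k0" ls' "c @ blk' a n lab k0"] Suc.hyps(2) l k by auto
  show ?case unfolding u using wr_trans[OF w1[simplified] w2[simplified]] by simp
qed

definition fe :: "nat set \<Rightarrow> gentry \<Rightarrow> gentry" where
  "fe F = (\<lambda>(l, ov, s). if l \<in> F then (l, \<not> ov, \<not> s) else (l, ov, s))"

fun flipl :: "nat set \<Rightarrow> slet \<Rightarrow> slet" where
  "flipl F (C q s l) = C q (if l \<in> F then \<not> s else s) l"
| "flipl F (V m) = V m"

definition flipS :: "nat set \<Rightarrow> slet list \<Rightarrow> slet list" where
  "flipS F w = map (flipl F) w"

lemma spass_flip: "spass p (flipS F w) = (map (fe F) (fst (spass p w)), snd (spass p w))"
  by (induction p w rule: spass.induct) (auto simp: flipS_def Let_def fe_def)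

lemma sperm_flip: "sperm (flipS F w) = sperm w"
  by (rule ext) (simp add: sperm_def spass_flip)

lemma scode_flip: "scode N (flipS F w) = map (fe F) (scode N w)"
  by (simp add: scode_def sperm_flip spass_flip map_concat comp_def)

lemma cchange_fe: "x \<notin> F \<Longrightarrow> cchange x (map (fe F) E) = map (fe (insert x F)) E"
  by (induction E) (auto simp: cchange_def fe_def)

lemma labels_fe: "labels (map (fe F) E) = labels E"
proof -
  have "fst \<circ> fe F = fst" by (auto simp: fe_def)
  then have "fst ` fe F ` A = fst ` A" for A by (metis image_comp)
  then show ?thesis by (simp add: labels_def)
qed

lemma flipS_empty: "flipS {} w = w"
proof -
  have "flipl {} x = x" for x by (cases x) auto
  then show ?thesis by (simp add: flipS_def map_idI)
qed

lemma unknots_flips: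
  "distinct xs \<Longrightarrow> set xs \<inter> F = {} \<Longrightarrow> set xs \<subseteq> labels (scode N w) \<Longrightarrow>
   unknots_with (scode N (flipS (F \<union> set xs) w)) M \<Longrightarrow> unknots_with (scode N (flipS F w)) (M + length xs)"
proof (induction xs arbitrary: F)
  case Nil then show ?case by simp
next
  case (Cons x xs)
  have ih: "unknots_with (scode N (flipS (insert x F) w)) (M + length xs)"
    using Cons.prems by (intro Cons.IH) auto
  have xF: "x \<notin> F" using Cons.prems by auto
  have e: "scode N (flipS (insert x F) w) = cchange x (scode N (flipS F w))"
    by (simp add: scode_flip cchange_fe[OF xF])
  have l: "x \<in> labels (scode N (flipS F w))" using Cons.prems by (simp add: scode_flip labels_fe)
  show ?case using unknots_change[OF l] ih e by simp
qed

lemma sperm_lp: "map lp w = map lp w' \<Longrightarrow> sperm w = sperm w'"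
proof (induction w arbitrary: w')
  case Nil then show ?case by simp
next
  case (Cons x w)
  then obtain y w'' where w': "w' = y # w''" "lp x = lp y" "map lp w = map lp w''" by auto
  have e: "sperm (z # v) = sperm v \<circ> sw (lp z)" for z v by (cases z) auto
  show ?case using Cons.IH[OF w'(3)] w' e by simp
qed

lemma wf_flip: "wfk N w \<Longrightarrow> wfk N (flipS F w)"
proof -
  assume w: "wfk N w"
  have lp: "lp (flipl F x) = lp x" for x by (cases x) auto
  have wl: "wlabels (flipS F v) = wlabels v" for v
    by (induction v rule: wlabels.induct) (auto simp: flipS_def)
  show ?thesis using w knotp_cong[OF sperm_flip[of F w]]
    by (auto simp: wfk_def inrange_def wl[unfolded flipS_def] flipS_def lp)
qed

lemma wlabels_split: "l \<in> set (wlabels w) \<Longrightarrow> \<exists>a m s b. w = a @ C m s l # b"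
proof (induction w rule: wlabels.induct)
  case 1 then show ?case by simp
next
  case (2 m w) then show ?case by (metis append_Cons wlabels.simps(2))
next
  case (3 m s l' w)
  show ?case
  proof (cases "l = l'")
    case True then show ?thesis by (metis append_Nil)
  next
    case False then have "l \<in> set (wlabels w)" using 3(2) by simp
    then show ?thesis using 3(1) by (metis append_Cons)
  qed
qed

lemma labels_in_code: "wfk N w \<Longrightarrow> set (wlabels w) \<subseteq> labels (scode N w)"
proof
  fix l assume w: "wfk N w" and l: "l \<in> set (wlabels w)"
  obtain a m s b where wd: "w = a @ C m s l # b" using wlabels_split[OF l] by blast
  have w': "wfk N (a @ (C m s l # b))" using w wd by simp
  have m: "1 \<le> m" "m < N" using w wd by (auto simp: wfk_def inrange_def)
  obtain r where r: "r < N" "sperm a (orb (a @ (C m s l # b)) r) = m" using g_exists[OF w', of m] m by auto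
  have "(l, s, s) \<in> set (fst (spass (orb w r) w))"
    using r wd by (simp add: spass_append sperm_def Let_def)
  moreover have "set (fst (spass (orb w r) w)) \<subseteq> set (scode N w)"
    using r(1) by (auto simp: scode_orb)
  ultimately show "l \<in> labels (scode N w)" by (force simp: labels_def)
qed

definition T :: "nat \<Rightarrow> nat \<Rightarrow> (nat \<Rightarrow> nat \<Rightarrow> nat) \<Rightarrow> slet list" where
  "T a n lab = concat (map (\<lambda>k. map (\<lambda>m. C (a + m) True (lab k m)) [0..<n - 1]) [0..<n])"

definition Tf :: "nat \<Rightarrow> nat \<Rightarrow> (nat \<Rightarrow> nat \<Rightarrow> nat) \<Rightarrow> slet list" where
  "Tf a n lab = concat (map (\<lambda>k. map (\<lambda>m. C (a + m) (k = 0 \<or> m \<noteq> n - 1 - k) (lab k m)) [0..<n - 1]) [0..<n])"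

lemma sweep_map: "sweep a (map f [0..<L]) = map (\<lambda>m. C (a + m) True (f m)) [0..<L]"
proof (induction L)
  case 0 then show ?case by simp
next
  case (Suc L)
  have "sweep a (map f [0..<L] @ [f L]) = sweep a (map f [0..<L]) @ sweep (a + L) [f L]"
    using sweep_append[of a "map f [0..<L]" "[f L]"] by simp
  then show ?case using Suc by simp
qed

lemma Tf_form: "1 \<le> n \<Longrightarrow> Tf a n lab = sweep a (map (lab 0) [0..<n - 1]) @ concat (map (blk a n lab) [1..<n])"
proof -
  assume n: "1 \<le> n"
  have u: "[0..<n] = 0 # [1..<n]" using n by (simp add: upt_conv_Cons)
  have b: "map (\<lambda>k. map (\<lambda>m. C (a + m) (k = 0 \<or> m \<noteq> n - 1 - k) (lab k m)) [0..<n - 1]) [1..<n] = map (blk a n lab) [1..<n]"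
    by (auto simp: blk_def)
  have b0: "map (\<lambda>m. C (a + m) (0 = (0::nat) \<or> m \<noteq> n - 1 - 0) (lab 0 m)) [0..<n - 1] = sweep a (map (lab 0) [0..<n - 1])"
    by (simp add: sweep_map)
  show ?thesis unfolding Tf_def u list.map(2) concat.simps(2) b b0 ..
qed

lemma map_shift: "map f [Suc x..<Suc y] = map (f \<circ> Suc) [x..<y]"
  by (simp only: map_Suc_upt[symmetric] map_map)

lemma blk'_form:
  assumes "k' + 2 \<le> n"
  shows "blk' a n lab (Suc k') = map (\<lambda>m'. C (Suc a + m') True (lab (Suc k') (if m' < n - 2 - k' then m' else Suc m'))) [0..<n - 2]"
proof -
  define p where "p = n - 2"
  have p: "n = Suc (Suc p)" using assms by (simp add: p_def)
  have kp: "k' \<le> p" using assms p by simp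
  have u: "[0..<p] = [0..<p - k'] @ [p - k'..<p]" using upt_add_eq_append[of 0 "p - k'" k'] kp by simp
  have s: "[Suc p - k'..<Suc p] = [Suc (p - k')..<Suc p]" using kp by (simp add: Suc_diff_le)
  show ?thesis unfolding blk'_def p u
    apply (simp del: upt_Suc add: Suc_diff_le[OF kp] map_shift)
    apply (subst u)
    apply (simp only: map_append)
    apply (rule arg_cong2[where f=append])
    apply (auto intro!: map_cong)
    done
qed

lemma T_step: "2 \<le> n \<Longrightarrow> concat (map (blk' a n lab) [1..<n]) =
   T (Suc a) (n - 1) (\<lambda>k' m'. lab (Suc k') (if m' < n - 2 - k' then m' else Suc m'))"
proof -
  assume n: "2 \<le> n"
  have u: "[1..<n] = map Suc [0..<n - 1]" using n by (simp add: map_Suc_upt)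
  have "map (blk' a n lab) [1..<n] = map (\<lambda>k'. map (\<lambda>m'. C (Suc a + m') True (lab (Suc k') (if m' < n - 2 - k' then m' else Suc m'))) [0..<n - 2]) [0..<n - 1]"
    unfolding u map_map comp_def
  proof (rule map_cong[OF refl])
    fix k' assume "k' \<in> set [0..<n - 1]"
    then have "k' + 2 \<le> n" by auto
    then show "blk' a n lab (Suc k') = map (\<lambda>m'. C (Suc a + m') True (lab (Suc k') (if m' < n - 2 - k' then m' else Suc m'))) [0..<n - 2]"
      by (rule blk'_form)
  qed
  moreover have "n - 1 - 1 = n - 2" by simp
  ultimately show ?thesis by (simp add: T_def)
qed

lemma lp_T_Tf: "map lp (T a n lab) = map lp (Tf a n lab)"
  by (simp add: T_def Tf_def map_concat comp_def)

definition Hc :: "nat \<Rightarrow> (nat \<Rightarrow> nat \<Rightarrow> nat) \<Rightarrow> slet list \<Rightarrow> slet list \<Rightarrow> bool" where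
  "Hc n lab c d \<longleftrightarrow> inj_on (\<lambda>(k, m). lab k m) ({..<n} \<times> {..<n - 1}) \<and>
     (\<forall>k<n. \<forall>m<n - 1. lab k m \<notin> set (wlabels c) \<and> lab k m \<notin> set (wlabels d))"

lemma Hc_inj:
  assumes "Hc n lab c d" "k < n" "m < n - 1" "k' < n" "m' < n - 1" "lab k m = lab k' m'"
  shows "k = k' \<and> m = m'"
proof -
  have i: "inj_on (\<lambda>(k, m). lab k m) ({..<n} \<times> {..<n - 1})" using assms(1) by (simp add: Hc_def)
  have "(k, m) = (k', m')" by (rule inj_onD[OF i]) (use assms in auto)
  then show ?thesis by simp
qed

lemma flipS_id: "set (wlabels c) \<inter> F = {} \<Longrightarrow> flipS F c = c"
  by (induction c rule: wlabels.induct) (auto simp: flipS_def)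

lemma flipS_append: "flipS F (u @ v) = flipS F u @ flipS F v"
  by (simp add: flipS_def)

lemma As_mem:
  assumes H: "Hc n lab c d" and k: "k < n" and m: "m < n - 1"
  shows "lab k m \<in> set (map (\<lambda>k. lab k (n - 1 - k)) [1..<n]) \<longleftrightarrow> (k \<noteq> 0 \<and> m = n - 1 - k)"
proof
  assume "lab k m \<in> set (map (\<lambda>k. lab k (n - 1 - k)) [1..<n])"
  then obtain k' where k': "1 \<le> k'" "k' < n" "lab k m = lab k' (n - 1 - k')" by auto
  have "k = k' \<and> m = n - 1 - k'"
    by (rule Hc_inj[OF H k m]) (use k' in auto)
  then show "k \<noteq> 0 \<and> m = n - 1 - k" using k' by auto
next
  assume "k \<noteq> 0 \<and> m = n - 1 - k"
  then show "lab k m \<in> set (map (\<lambda>k. lab k (n - 1 - k)) [1..<n])" using k by auto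
qed

lemma flip_T:
  assumes H: "Hc n lab c d" and n: "1 \<le> n"
  shows "flipS (set (map (\<lambda>k. lab k (n - 1 - k)) [1..<n])) (c @ T a n lab @ d) = c @ Tf a n lab @ d"
proof -
  define F where "F = set (map (\<lambda>k. lab k (n - 1 - k)) [1..<n])"
  have Fsub: "F \<subseteq> {lab k m | k m. k < n \<and> m < n - 1}" unfolding F_def by force
  have c: "flipS F c = c" using H Fsub by (intro flipS_id) (fastforce simp: Hc_def)
  have d: "flipS F d = d" using H Fsub by (intro flipS_id) (fastforce simp: Hc_def)
  have t: "flipS F (T a n lab) = Tf a n lab"
    unfolding T_def Tf_def flipS_def map_concat map_map comp_def
    apply (rule arg_cong[where f = concat])
    apply (rule map_cong[OF refl])
    apply (rule map_cong[OF refl])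
    subgoal for k m using As_mem[OF H, of k m] by (simp add: F_def)
    done
  show ?thesis using c d t by (simp add: flipS_append F_def)
qed

lemma Hc_step:
  assumes H: "Hc n lab c d" and n: "2 \<le> n"
  shows "Hc (n - 1) (\<lambda>k' m'. lab (Suc k') (if m' < n - 2 - k' then m' else Suc m')) c d"
proof -
  define idx where "idx k' m' = (if m' < n - 2 - k' then m' else Suc m')" for k' m' :: nat
  have ir: "k' < n - 1 \<Longrightarrow> m' < n - 2 \<Longrightarrow> Suc k' < n \<and> idx k' m' < n - 1" for k' m' by (auto simp: idx_def)
  have inj: "inj_on (\<lambda>(k', m'). lab (Suc k') (idx k' m')) ({..<n - 1} \<times> {..<n - 1 - 1})"
  proof (rule inj_onI)
    fix p1 p2 :: "nat \<times> nat"
    assume p1: "p1 \<in> {..<n - 1} \<times> {..<n - 1 - 1}" and p2: "p2 \<in> {..<n - 1} \<times> {..<n - 1 - 1}"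
      and e: "(\<lambda>(k', m'). lab (Suc k') (idx k' m')) p1 = (\<lambda>(k', m'). lab (Suc k') (idx k' m')) p2"
    obtain k1 m1 where q1: "p1 = (k1, m1)" by (cases p1)
    obtain k2 m2 where q2: "p2 = (k2, m2)" by (cases p2)
    have a: "k1 < n - 1" "m1 < n - 2" "k2 < n - 1" "m2 < n - 2" "lab (Suc k1) (idx k1 m1) = lab (Suc k2) (idx k2 m2)"
      using p1 p2 e q1 q2 by auto
    have "Suc k1 = Suc k2 \<and> idx k1 m1 = idx k2 m2"
      by (rule Hc_inj[OF H]) (use a ir[of k1 m1] ir[of k2 m2] in auto)
    then show "p1 = p2" using q1 q2 by (auto simp: idx_def split: if_splits)
  qed
  have disj: "\<forall>k<n - 1. \<forall>m<n - 1 - 1. lab (Suc k) (idx k m) \<notin> set (wlabels c) \<and> lab (Suc k) (idx k m) \<notin> set (wlabels d)"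
    using H ir by (auto simp: Hc_def)
  show ?thesis using inj disj unfolding Hc_def idx_def by simp
qed

lemma As_distinct:
  assumes H: "Hc n lab c d"
  shows "distinct (map (\<lambda>k. lab k (n - 1 - k)) [1..<n])"
proof -
  have "inj_on (\<lambda>k. lab k (n - 1 - k)) {1..<n}"
  proof (rule inj_onI)
    fix x y assume a: "x \<in> {1..<n}" "y \<in> {1..<n}" "lab x (n - 1 - x) = lab y (n - 1 - y)"
    have "x = y \<and> n - 1 - x = n - 1 - y"
      by (rule Hc_inj[OF H]) (use a in auto)
    then show "x = y" by simp
  qed
  then show ?thesis by (simp add: distinct_map)
qed

lemma As_labels:
  assumes H: "Hc n lab c d" and w: "wfk N (c @ T a n lab @ d)"
  shows "set (map (\<lambda>k. lab k (n - 1 - k)) [1..<n]) \<subseteq> labels (scode N (c @ T a n lab @ d))"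
proof -
  have "set (map (\<lambda>k. lab k (n - 1 - k)) [1..<n]) \<subseteq> set (wlabels (T a n lab))"
  proof
    fix l assume "l \<in> set (map (\<lambda>k. lab k (n - 1 - k)) [1..<n])"
    then obtain k where k: "1 \<le> k" "k < n" "l = lab k (n - 1 - k)" by auto
    have wT: "wlabels (T a n lab) = concat (map (\<lambda>k. map (lab k) [0..<n - 1]) [0..<n])"
    proof -
      have "wlabels (concat xs) = concat (map wlabels xs)" for xs by (induction xs) auto
      moreover have "wlabels (map (\<lambda>m. C (a + m) True (lab k m)) ys) = map (lab k) ys" for k ys by (induction ys) auto
      ultimately show ?thesis by (simp add: T_def comp_def)
    qed
    show "l \<in> set (wlabels (T a n lab))" unfolding wT using k by force
  qed
  then show ?thesis using labels_in_code[OF w] by auto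
qed

lemma delta:
  "\<forall>a lab c d. sperm (c @ T a n lab @ d) = sperm (c @ d) \<and>
     (Hc n lab c d \<longrightarrow> wfk N (c @ T a n lab @ d) \<longrightarrow>
       (\<forall>M. unknots_with (scode N (c @ d)) M \<longrightarrow> unknots_with (scode N (c @ T a n lab @ d)) (M + n * (n - 1) div 2)))"
proof (induction n)
  case 0 then show ?case by (simp add: T_def)
next
  case (Suc n')
  show ?case
  proof (cases "n' = 0")
    case True then show ?thesis by (simp add: T_def)
  next
    case False
    define n where "n = Suc n'"
    have n2: "2 \<le> n" using False by (simp add: n_def)
    show ?thesis unfolding n_def[symmetric]
    proof (intro allI)
      fix a :: nat and lab :: "nat \<Rightarrow> nat \<Rightarrow> nat" and c d :: "slet list"
      define lab' where "lab' = (\<lambda>k' m'. lab (Suc k') (if m' < n - 2 - k' then m' else Suc m'))"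
      define As where "As = map (\<lambda>k. lab k (n - 1 - k)) [1..<n]"
      define W where "W = c @ T a n lab @ d"
      define W1 where "W1 = c @ Tf a n lab @ d"
      define W2 where "W2 = c @ T (Suc a) n' lab' @ d"
      have n'e: "n' = n - 1" by (simp add: n_def)
      have blocks': "wr N W1 W2"
      proof -
        have "wr N (c @ sweep a (map (lab 0) [0..<n - 1]) @ concat (map (blk a n lab) [1..<n]) @ d)
                   (c @ concat (map (blk' a n lab) [1..<n]) @ d)"
          by (rule blocks) (use n2 in auto)
        moreover have tf: "Tf a n lab = sweep a (map (lab 0) [0..<n - 1]) @ concat (map (blk a n lab) [1..<n])"
          using n2 by (intro Tf_form) simp
        moreover have ts: "concat (map (blk' a n lab) [1..<n]) = T (Suc a) n' lab'"
          unfolding lab'_def n'e by (rule T_step[OF n2])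
        ultimately show ?thesis unfolding W1_def W2_def by simp
      qed
      have sp1: "sperm W = sperm W1"
        unfolding W_def W1_def by (rule sperm_lp) (simp add: lp_T_Tf)
      have IH: "sperm W2 = sperm (c @ d) \<and> (Hc n' lab' c d \<longrightarrow> wfk N W2 \<longrightarrow>
          (\<forall>M. unknots_with (scode N (c @ d)) M \<longrightarrow> unknots_with (scode N W2) (M + n' * (n' - 1) div 2)))"
        using Suc.IH unfolding W2_def by blast
      have "sperm W = sperm (c @ d)" using sp1 blocks' IH by (simp add: wr_def)
      moreover have "Hc n lab c d \<longrightarrow> wfk N W \<longrightarrow>
          (\<forall>M. unknots_with (scode N (c @ d)) M \<longrightarrow> unknots_with (scode N W) (M + n * (n - 1) div 2))"
      proof (intro impI allI)
        fix M assume H: "Hc n lab c d" and w: "wfk N W" and u: "unknots_with (scode N (c @ d)) M"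
        have fl: "flipS (set As) W = W1" unfolding As_def W_def W1_def by (rule flip_T[OF H]) (use n2 in auto)
        have w1: "wfk N W1" using wf_flip[OF w, of "set As"] fl by simp
        have g: "wfk N W2 \<and> gequiv (scode N W1) (scode N W2)" using blocks' w1 by (simp add: wr_def)
        have H2: "Hc n' lab' c d" unfolding n'e lab'_def by (rule Hc_step[OF H n2])
        have u2: "unknots_with (scode N W2) (M + n' * (n' - 1) div 2)" using IH H2 g u by blast
        have u1: "unknots_with (scode N W1) (M + n' * (n' - 1) div 2)" using unknots_gequiv g u2 by blast
        have u0: "unknots_with (scode N (flipS {} W)) (M + n' * (n' - 1) div 2 + length As)"
          by (rule unknots_flips) (use As_distinct[OF H] As_labels[OF H] w u1 fl in \<open>auto simp: As_def W_def\<close>)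
        have ar: "n' * (n' - 1) div 2 + length As = n * (n - 1) div 2"
        proof -
          have "length As = n'" by (simp add: As_def n_def)
          moreover have "n * (n - 1) = n' * (n' - 1) + 2 * n'" using False by (cases n') (simp_all add: n_def algebra_simps)
          ultimately show ?thesis by simp
        qed
        show "unknots_with (scode N W) (M + n * (n - 1) div 2)" using u0 ar by (simp add: flipS_empty add.assoc)
      qed
      ultimately show "sperm (c @ T a n lab @ d) = sperm (c @ d) \<and>
          (Hc n lab c d \<longrightarrow> wfk N (c @ T a n lab @ d) \<longrightarrow>
            (\<forall>M. unknots_with (scode N (c @ d)) M \<longrightarrow> unknots_with (scode N (c @ T a n lab @ d)) (M + n * (n - 1) div 2)))"
        unfolding W_def by blast
    qed
  qed
qed

lemma tol_append: "tol t (u @ v) = tol t u @ tol (t + length u) v"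
  by (induction t u rule: tol.induct) auto

fun bpos :: "bletter \<Rightarrow> nat" where "bpos (Virt m) = m" | "bpos (Clas m) = m"

lemma lp_tol: "map lp (tol t w) = map bpos w"
  by (induction t w rule: tol.induct) auto

lemma wlabels_tol: "distinct (wlabels (tol t w)) \<and> set (wlabels (tol t w)) \<subseteq> {t..<t + length w}"
proof (induction t w rule: tol.induct)
  case (1 t) then show ?case by simp
next
  case (2 t m w) then show ?case by auto
next
  case (3 t m w) then show ?case by auto
qed

fun relabl :: "(nat \<Rightarrow> nat) \<Rightarrow> slet \<Rightarrow> slet" where
  "relabl f (C q s l) = C q s (f l)"
| "relabl f (V m) = V m"

lemma spass_relab: "spass p (map (relabl f) w) = (map (\<lambda>(l, ov, s). (f l, ov, s)) (fst (spass p w)), snd (spass p w))"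
  by (induction p w rule: spass.induct) (auto simp: Let_def)

lemma sperm_relab: "sperm (map (relabl f) w) = sperm w"
  by (rule ext) (simp add: sperm_def spass_relab)

lemma scode_relab: "scode N (map (relabl f) w) = map (\<lambda>(l, ov, s). (f l, ov, s)) (scode N w)"
  by (simp add: scode_def sperm_relab spass_relab map_concat comp_def)

lemma relab_tol: "(\<forall>x<length w. f (t + x) = t' + x) \<Longrightarrow> map (relabl f) (tol t w) = tol t' w"
proof (induction t w arbitrary: t' rule: tol.induct)
  case (1 t) then show ?case by simp
next
  case (2 t m w)
  have "map (relabl f) (tol (Suc t) w) = tol (Suc t') w"
    using 2(2) by (intro 2(1)) (metis Suc_less_eq add_Suc_right length_Cons add_Suc)
  then show ?case by simp
next
  case (3 t m w)
  have "map (relabl f) (tol (Suc t) w) = tol (Suc t') w"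
    using 3(2) by (intro 3(1)) (metis Suc_less_eq add_Suc_right length_Cons add_Suc)
  moreover have "f t = t'" using 3(2)[rule_format, of 0] by simp
  ultimately show ?case by simp
qed

lemma tol_cls: "tol t (map Clas [1..<Suc L]) = map (\<lambda>m. C (1 + m) True (t + m)) [0..<L]"
proof (induction L)
  case 0 then show ?case by simp
next
  case (Suc L)
  have "tol t (map Clas [1..<Suc L] @ [Clas (Suc L)]) = tol t (map Clas [1..<Suc L]) @ tol (t + L) [Clas (Suc L)]"
    by (simp add: tol_append)
  then show ?case using Suc by simp
qed

lemma tol_rep: "tol t (concat (replicate r (map Clas [1..<Suc L]))) =
   concat (map (\<lambda>k. map (\<lambda>m. C (1 + m) True (t + k * L + m)) [0..<L]) [0..<r])"
proof (induction r)
  case 0 then show ?case by simp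
next
  case (Suc r)
  define X where "X = map Clas [1..<Suc L]"
  have e: "concat (replicate (Suc r) X) = concat (replicate r X) @ X"
    by (simp add: replicate_append_same[symmetric])
  have len: "length (concat (replicate r X)) = r * L" by (simp add: X_def length_concat sum_list_replicate)
  have "tol t (concat (replicate (Suc r) X)) = tol t (concat (replicate r X)) @ tol (t + r * L) X"
    by (simp only: e tol_append len)
  also have "\<dots> = concat (map (\<lambda>k. map (\<lambda>m. C (1 + m) True (t + k * L + m)) [0..<L]) [0..<r])
      @ map (\<lambda>m. C (1 + m) True (t + r * L + m)) [0..<L]"
    unfolding X_def tol_cls Suc.IH ..
  finally show ?case unfolding X_def by simp
qed

lemma grid_inj:
  assumes "(m::nat) < L" "m' < L" "k * L + m = k' * L + m'"
  shows "k = k' \<and> m = m'"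
proof -
  have L: "0 < L" using assms by simp
  have "k = (k * L + m) div L" using assms(1,2) L by (simp add: add.commute[of "k * L" m])
  also have "\<dots> = (k' * L + m') div L" using assms(3) by simp
  also have "\<dots> = k'" using assms(1,2) L by (simp add: add.commute[of "k' * L" m'])
  finally have kk: "k = k'" .
  have "m = (k * L + m) mod L" using assms(1,2) L by (simp add: add.commute[of "k * L" m])
  also have "\<dots> = (k' * L + m') mod L" using assms(3) by simp
  also have "\<dots> = m'" using assms(1,2) L by (simp add: add.commute[of "k' * L" m'])
  finally show ?thesis using kk by simp
qed

lemma grid_bound: "(k::nat) < n \<Longrightarrow> m < L \<Longrightarrow> k * L + m < n * L"
proof -
  assume a: "k < n" "m < L"
  have "k * L + m < k * L + L" using a by simp
  also have "\<dots> = Suc k * L" by simp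
  also have "\<dots> \<le> n * L" using a by (intro mult_le_mono1) simp
  finally show ?thesis .
qed

theorem lemma3p4:
  fixes i j k :: nat
  assumes "0 < i" and "i < j" and "k < i"
    and "ijk_is_knot i (j - i) k"
    and "virt_null_homotopic (ijk i (j - i) k)"
    and "real (vu (ijk i (j - i) k)) \<le> ((real i - 1) * (real (j - i) - 1) + real k) / 2"
  shows "ijk_is_knot i j k \<and> virt_null_homotopic (ijk i j k)
    \<and> real (vu (ijk i j k)) \<le> ((real i - 1) * (real j - 1) + real k) / 2"
proof -
  define L where "L = i - 1"
  have iL: "i = Suc L" using assms(1) by (simp add: L_def)
  define preB where "preB = map Virt [1..<i] @ concat (replicate (j - i - 1) (map Clas [1..<i]))"
  define D where "D = concat (replicate i (map Clas [1..<i]))"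
  define postB where "postB = map Clas (rev [1..<Suc k])"
  have vbig: "vbword i j k = preB @ D @ postB"
  proof -
    have "j - 1 = (j - i - 1) + i" using assms by simp
    then show ?thesis by (simp add: vbword_def preB_def D_def postB_def replicate_add)
  qed
  have vsmall: "vbword i (j - i) k = preB @ postB"
    by (simp add: vbword_def preB_def postB_def)
  define tP where "tP = length preB"
  have lenD: "length D = i * L" by (simp add: D_def length_concat sum_list_replicate iL)
  define P where "P = tol 0 preB"
  define Q where "Q = tol tP postB"
  define Qb where "Qb = tol (tP + i * L) postB"
  define lab where "lab k m = tP + k * L + m" for k m
  have TD: "tol tP D = T 1 i lab"
    unfolding D_def T_def lab_def iL using tol_rep[of tP "Suc L" L] by simp
  have Wbig: "tol 0 (vbword i j k) = P @ T 1 i lab @ Qb"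
    unfolding vbig by (simp add: tol_append P_def Qb_def tP_def lenD TD[unfolded tP_def])
  have Wsmall: "tol 0 (vbword i (j - i) k) = P @ Q"
    unfolding vsmall by (simp add: tol_append P_def Q_def tP_def)
  define f where "f l = (if l < tP then l else l - i * L)" for l
  have rP: "map (relabl f) P = P" unfolding P_def by (rule relab_tol) (simp add: f_def tP_def)
  have rQ: "map (relabl f) Qb = Q" unfolding Qb_def Q_def by (rule relab_tol) (simp add: f_def)
  have rPQ: "map (relabl f) (P @ Qb) = P @ Q" using rP rQ by simp
  have lP: "set (wlabels P) \<subseteq> {0..<tP}" using wlabels_tol[of 0 preB] by (simp add: P_def tP_def)
  have lQ: "set (wlabels Qb) \<subseteq> {tP + i * L..<tP + i * L + length postB}" using wlabels_tol[of "tP + i * L" postB] by (simp add: Qb_def)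
  have gq: "gequiv (scode i (P @ Qb)) (scode i (P @ Q))"
  proof -
    have sub: "labels (scode i (P @ Qb)) \<subseteq> {0..<tP} \<union> {tP + i * L..<tP + i * L + length postB}"
      using labels_scode[of i "P @ Qb"] lP lQ by auto
    have "inj_on f ({0..<tP} \<union> {tP + i * L..<tP + i * L + length postB})"
      by (rule inj_onI) (auto simp: f_def split: if_splits)
    then have inj: "inj_on f (labels (scode i (P @ Qb)))" using sub by (rule inj_on_subset)
    have "scode i (P @ Q) = map (\<lambda>(l, ov, s). (f l, ov, s)) (scode i (P @ Qb))"
      using scode_relab[of i f "P @ Qb"] rPQ by simp
    then have "relabel (scode i (P @ Qb)) (scode i (P @ Q))" using inj by (auto simp: relabel_def)
    then show ?thesis by (simp add: gmove_def gmove_gequiv)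
  qed
  have H: "Hc i lab P Qb"
    unfolding Hc_def
  proof (intro conjI)
    show "inj_on (\<lambda>(k, m). lab k m) ({..<i} \<times> {..<i - 1})"
    proof (rule inj_onI)
      fix p1 p2 :: "nat \<times> nat"
      assume p1: "p1 \<in> {..<i} \<times> {..<i - 1}" and p2: "p2 \<in> {..<i} \<times> {..<i - 1}"
        and e: "(\<lambda>(k, m). lab k m) p1 = (\<lambda>(k, m). lab k m) p2"
      obtain k1 m1 where q1: "p1 = (k1, m1)" by (cases p1)
      obtain k2 m2 where q2: "p2 = (k2, m2)" by (cases p2)
      have a: "m1 < L" "m2 < L" "k1 * L + m1 = k2 * L + m2" using p1 p2 e q1 q2 by (auto simp: lab_def L_def)
      show "p1 = p2" using grid_inj[OF a] q1 q2 by simp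
    qed
  next
    show "\<forall>k<i. \<forall>m<i - 1. lab k m \<notin> set (wlabels P) \<and> lab k m \<notin> set (wlabels Qb)"
    proof (intro allI impI)
      fix k m assume km: "k < i" "m < i - 1"
      have "k * L + m < i * L" using grid_bound[of k i m L] km by (simp add: L_def)
      then show "lab k m \<notin> set (wlabels P) \<and> lab k m \<notin> set (wlabels Qb)"
        using lP lQ by (auto simp: lab_def)
    qed
  qed
  have spd: "sperm (P @ T 1 i lab @ Qb) = sperm (P @ Qb)"
    and dl: "Hc i lab P Qb \<longrightarrow> wfk i (P @ T 1 i lab @ Qb) \<longrightarrow> (\<forall>M. unknots_with (scode i (P @ Qb)) M \<longrightarrow>
        unknots_with (scode i (P @ T 1 i lab @ Qb)) (M + i * (i - 1) div 2))"
    using delta[of i i] by blast+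
  have spbig: "bperm (vbword i j k) = bperm (vbword i (j - i) k)"
    unfolding bperm_tol Wbig Wsmall spd using sperm_relab[of f "P @ Qb"] rPQ by simp
  have knot: "ijk_is_knot i j k"
    using assms(4) spbig by (simp add: ijk_is_knot_def closure_is_knot_def)
  have wfb: "wfk i (P @ T 1 i lab @ Qb)"
  proof -
    have "x \<in> set (vbword i j k) \<Longrightarrow> 1 \<le> bpos x \<and> bpos x < i" for x
      using assms(3) by (auto simp: vbword_def split: if_splits)
    then have "inrange i (tol 0 (vbword i j k))"
      using lp_tol[of 0 "vbword i j k"] unfolding inrange_def
      by (metis (no_types, lifting) image_iff list.set_map)
    moreover have "distinct (wlabels (tol 0 (vbword i j k)))" using wlabels_tol by blast
    moreover have "knotp i (tol 0 (vbword i j k))"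
      using knot by (simp add: ijk_is_knot_def closure_is_knot_def knotp_def orb_def bperm_tol)
    ultimately show ?thesis unfolding wfk_def Wbig by simp
  qed
  define M0 where "M0 = vu (ijk i (j - i) k)"
  have u0: "unknots_with (ijk i (j - i) k) M0"
    using assms(5) unfolding virt_null_homotopic_def vu_def M0_def by (rule LeastI_ex)
  have u1: "unknots_with (scode i (P @ Qb)) M0"
    using unknots_gequiv[OF gq] u0 by (simp add: ijk_def closure_code_tol Wsmall)
  have u2: "unknots_with (ijk i j k) (M0 + i * (i - 1) div 2)"
    using dl H wfb u1 by (simp add: ijk_def closure_code_tol Wbig)
  have vnh: "virt_null_homotopic (ijk i j k)" using u2 by (auto simp: virt_null_homotopic_def)
  have vle: "vu (ijk i j k) \<le> M0 + i * (i - 1) div 2"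
    unfolding vu_def by (rule Least_le) (rule u2)
  have ev: "real (i * (i - 1) div 2) = real i * (real i - 1) / 2"
  proof -
    have "even (i * (i - 1))" by auto
    then have "real (i * (i - 1) div 2) = real (i * (i - 1)) / 2" by (simp add: real_of_nat_div)
    then show ?thesis using assms(1) by (simp add: of_nat_diff)
  qed
  have "real (vu (ijk i j k)) \<le> real M0 + real i * (real i - 1) / 2"
    using vle ev by (metis of_nat_add of_nat_le_iff)
  also have "\<dots> \<le> ((real i - 1) * (real (j - i) - 1) + real k) / 2 + real i * (real i - 1) / 2"
    using assms(6) by (simp add: M0_def)
  also have "\<dots> = ((real i - 1) * (real j - 1) + real k) / 2"
    using assms(2) by (simp add: of_nat_diff field_simps)
  finally show ?thesis using knot vnh by simp
qed

end
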